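(* Let $0<q<1$. Then \[ \sum_{n=0}^{\infty}\frac{(1/2|q^{2})_{n}^{2}}{[n]_{q^{2}}!\,[n+2]_{q^{2}}!}\,q^{4n}=\frac{(1+q)^{4}q^{1/4}}{\pi_{q}(1+q+q^{2})^{2}}. \]
   Context: Let $0<q<1$ and write $q^{x}=e^{x\log q}$. $[z]_{q^2}=\frac{1-q^{2z}}{1-q^2}$; $[0]_{q^2}!=1$, $[n]_{q^2}!=\prod_{k=1}^n[k]_{q^2}$; $(1/2|q^2)_n=\prod_{k=0}^{n-1}[1/2+k]_{q^2}$ (empty product $=1$). With $(z;q)_\infty=\prod_{k\ge0}(1-zq^k)$, $\pi_q=(1-q^2)q^{1/4}\frac{(q^2;q^2)_\infty^2}{(q;q^2)_\infty^2}$. *)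

theory Defs
  imports "HOL-Analysis.Analysis"
begin

definition qnum :: "real \<Rightarrow> real \<Rightarrow> real" where
  "qnum Q z = (1 - Q powr z) / (1 - Q)"

definition qfact :: "real \<Rightarrow> nat \<Rightarrow> real" where
  "qfact Q n = (\<Prod>k=1..n. qnum Q (real k))"

text \<open>(1/2|Q)_n = prod_{k=0}^{n-1} [1/2 + k]_Q\<close>
definition qhalf_poch :: "real \<Rightarrow> nat \<Rightarrow> real" where
  "qhalf_poch Q n = (\<Prod>k<n. qnum Q (1/2 + real k))"

definition qpoch_inf :: "real \<Rightarrow> real \<Rightarrow> real" where
  "qpoch_inf z q = (\<Prod>k. 1 - z * q ^ k)"

definition pi_q :: "real \<Rightarrow> real" where
  "pi_q q = (1 - q^2) * q powr (1/4) * (qpoch_inf (q^2) (q^2))^2 / (qpoch_inf q (q^2))^2"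

end

theory Submission
  imports Defs
begin

definition poch :: "real \<Rightarrow> real \<Rightarrow> nat \<Rightarrow> real" where
  "poch q x n = (\<Prod>k<n. 1 - x * (q^2)^k)"

lemma poch_Suc: "poch q x (Suc n) = poch q x n * (1 - x*(q^2)^n)"
  by (simp add: poch_def)

lemma poch_0[simp]: "poch q x 0 = 1" by (simp add: poch_def)

lemma poch_shift: "poch q x (Suc n) = (1 - x) * poch q (x*q^2) n"
proof (induction n)
  case 0 then show ?case by (simp add: poch_def)
next
  case (Suc n)
  have "poch q x (Suc (Suc n)) = poch q x (Suc n) * (1 - x*(q^2)^(Suc n))" by (rule poch_Suc)
  also have "\<dots> = (1 - x) * (poch q (x*q^2) n * (1 - x*q^2*(q^2)^n))"
    using Suc by (simp add: mult_ac)
  also have "\<dots> = (1 - x) * poch q (x*q^2) (Suc n)" by (simp add: poch_Suc)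
  finally show ?case .
qed

lemma fac_small:
  fixes q x :: real
  assumes "0 < q" "q < 1" "0 \<le> x" "x < 1"
  shows "0 < 1 - x*(q^2)^k" "1 - x*(q^2)^k \<le> 1"
proof -
  have "q^2 \<le> 1" using assms by (simp add: power2_eq_square mult_le_one)
  then have "(q^2)^k \<le> 1" by (simp add: power_le_one)
  moreover have "0 \<le> (q^2)^k" by simp
  ultimately have "x*(q^2)^k \<le> x" using assms(3) by (simp add: mult_left_le)
  then show "0 < 1 - x*(q^2)^k" using assms by linarith
  show "1 - x*(q^2)^k \<le> 1" using assms by simp
qed

lemma poch_pos: "0 < q \<Longrightarrow> q < 1 \<Longrightarrow> 0 \<le> x \<Longrightarrow> x < 1 \<Longrightarrow> 0 < poch q x n"
  unfolding poch_def by (intro prod_pos) (smt (verit) fac_small(1))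

lemma fac_ineq:
  fixes q y c :: real
  assumes "0 < q" "q < 1" "0 < y" "y \<le> 1" "0 < c" "c \<le> q"
  shows "(1 - q*y)^2 \<le> (1 - q^2*y)*(1 - c*y)"
proof -
  have id: "(1 - q^2*y)*(1 - c*y) - (1 - q*y)^2 = y*((1-q)*(2*q - c*(1+q)) + q^2*(1-c)*(1-y))"
    by (simp add: power2_eq_square algebra_simps)
  have "c*(1+q) \<le> q*(1+q)" using assms by (intro mult_right_mono) auto
  also have "\<dots> \<le> q*2" using assms by (intro mult_left_mono) auto
  finally have h1: "0 \<le> 2*q - c*(1+q)" by simp
  have "0 \<le> (1-q)*(2*q - c*(1+q))" using h1 assms by simp
  moreover have "0 \<le> q^2*(1-c)*(1-y)" using assms by simp
  ultimately have "0 \<le> y*((1-q)*(2*q - c*(1+q)) + q^2*(1-c)*(1-y))" using assms by simp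
  then show ?thesis using id by linarith
qed

lemma poch_sq_le:
  assumes "0 < q" "q < 1" "0 < c" "c \<le> q"
  shows "poch q q n ^ 2 \<le> poch q (q^2) n * poch q c n"
proof -
  have "poch q q n ^ 2 = (\<Prod>k<n. (1 - q*(q^2)^k)^2)"
    by (simp add: poch_def prod_power_distrib)
  also have "\<dots> \<le> (\<Prod>k<n. (1 - q^2*(q^2)^k) * (1 - c*(q^2)^k))"
  proof (rule prod_mono)
    fix k assume "k \<in> {..<n}"
    have "q^2 \<le> 1" using assms by (simp add: power2_eq_square mult_le_one)
    then have y: "0 < (q^2)^k" "(q^2)^k \<le> 1" using assms by (auto simp: power_le_one)
    show "0 \<le> (1 - q*(q^2)^k)^2 \<and> (1 - q*(q^2)^k)^2 \<le> (1 - q^2*(q^2)^k) * (1 - c*(q^2)^k)"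
      using fac_ineq[OF assms(1,2) y assms(3,4)] by simp
  qed
  also have "\<dots> = poch q (q^2) n * poch q c n" by (simp add: poch_def prod.distrib)
  finally show ?thesis .
qed


definition tt :: "real \<Rightarrow> nat \<Rightarrow> nat \<Rightarrow> real" where
  "tt q m n = poch q q n ^ 2 / (poch q (q^2) n * poch q (q^6*(q^2)^m) n) * (q^4*(q^2)^m)^n"

lemma small_pows:
  fixes q :: real
  assumes "0 < q" "q < 1"
  shows "0 < q^6*(q^2)^m" "q^6*(q^2)^m \<le> q" "q^6*(q^2)^m < 1" "q^2 < 1"
    "0 < q^4*(q^2)^m" "q^4*(q^2)^m < 1" "0 \<le> (q^2)^n" "(q^2)^n \<le> 1"
proof -
  have q2: "q^2 < 1" using assms by (simp add: power_less_one_iff)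
  then show "q^2 < 1" .
  have pm: "(q^2)^k \<le> 1" for k using q2 by (simp add: power_le_one)
  then show "(q^2)^n \<le> 1" .
  show "0 \<le> (q^2)^n" by simp
  have q5: "q^5 \<le> 1" using assms by (simp add: power_le_one)
  have "q^6*(q^2)^m \<le> q^6" using pm[of m] assms by (simp add: mult_left_le)
  also have "q^6 = q * q^5" by (simp add: numeral_eq_Suc)
  also have "\<dots> \<le> q" using q5 assms by (simp add: mult_left_le)
  finally show "q^6*(q^2)^m \<le> q" .
  then show "q^6*(q^2)^m < 1" using assms by linarith
  show "0 < q^6*(q^2)^m" "0 < q^4*(q^2)^m" using assms by simp_all
  have "q^4*(q^2)^m \<le> q^4" using pm[of m] assms by (simp add: mult_left_le)
  also have "q^4 < 1" using assms by (simp add: power_less_one_iff)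
  finally show "q^4*(q^2)^m < 1" .
qed

lemma tt_nonneg_le:
  assumes "0 < q" "q < 1"
  shows "0 \<le> tt q m n" "tt q m n \<le> (q^4*(q^2)^m)^n"
proof -
  note sp = small_pows[OF assms(1,2)]
  have P2: "0 < poch q (q^2) n" using assms(1,2) sp by (intro poch_pos) auto
  have P3: "0 < poch q (q^6*(q^2)^m) n" using assms(1,2) sp by (intro poch_pos) auto
  have le: "poch q q n ^ 2 \<le> poch q (q^2) n * poch q (q^6*(q^2)^m) n"
    using assms(1,2) sp by (intro poch_sq_le) auto
  have r0: "0 \<le> poch q q n ^ 2 / (poch q (q^2) n * poch q (q^6*(q^2)^m) n)"
    using P2 P3 by simp
  have r1: "poch q q n ^ 2 / (poch q (q^2) n * poch q (q^6*(q^2)^m) n) \<le> 1"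
    using P2 P3 le by simp
  have g: "0 \<le> (q^4*(q^2)^m)^n" using assms by simp
  show "0 \<le> tt q m n" unfolding tt_def by (rule mult_nonneg_nonneg[OF r0 g])
  show "tt q m n \<le> (q^4*(q^2)^m)^n" unfolding tt_def
    by (rule mult_left_le_one_le[OF g r0 r1])
qed

lemma tt_summable:
  assumes "0 < q" "q < 1"
  shows "summable (tt q m)"
proof (rule summable_comparison_test)
  note sp = small_pows[OF assms]
  show "\<exists>N. \<forall>n\<ge>N. norm (tt q m n) \<le> (q^4*(q^2)^m)^n"
    using tt_nonneg_le[OF assms] by auto
  show "summable (\<lambda>n. (q^4*(q^2)^m)^n)"
    using sp by (intro summable_geometric) auto
qed

lemma tt_Suc_n:
  fixes q :: real and n m :: nat
  assumes "0 < q" "q < 1"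
  defines "x \<equiv> (q^2)^n" and "c \<equiv> q^6*(q^2)^m" and "z \<equiv> q^4*(q^2)^m"
  shows "tt q m (Suc n) = tt q m n * ((1 - q*x)^2 * z / ((1 - q^2*x)*(1 - c*x)))"
proof -
  note sp = small_pows[OF assms(1,2)]
  have P2: "0 < poch q (q^2) n" using assms(1,2) sp by (intro poch_pos) auto
  have P3: "0 < poch q c n" unfolding c_def using assms(1,2) sp by (intro poch_pos) auto
  have f2: "0 < 1 - q^2*x" unfolding x_def using assms(1,2) sp by (intro fac_small) auto
  have f3: "0 < 1 - c*x" unfolding x_def c_def using assms(1,2) sp by (intro fac_small) auto
  show ?thesis
    unfolding tt_def c_def[symmetric] z_def[symmetric] poch_Suc x_def[symmetric]
    using P2 P3 f2 f3 by (simp add: field_simps power2_eq_square)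
qed

lemma tt_Suc_m:
  fixes q :: real and n m :: nat
  assumes "0 < q" "q < 1"
  defines "x \<equiv> (q^2)^n" and "c \<equiv> q^6*(q^2)^m" and "z \<equiv> q^4*(q^2)^m"
  shows "tt q (Suc m) n = tt q m n * ((1 - c)*x / (1 - c*x))"
proof -
  note sp = small_pows[OF assms(1,2)]
  have P2: "0 < poch q (q^2) n" using assms(1,2) sp by (intro poch_pos) auto
  have P3: "0 < poch q c n" unfolding c_def using assms(1,2) sp by (intro poch_pos) auto
  have f3: "0 < 1 - c*x" unfolding x_def c_def using assms(1,2) sp by (intro fac_small) auto
  have c1: "0 < 1 - c" using sp unfolding c_def by simp
  have e1: "q^6*(q^2)^Suc m = c*q^2" unfolding c_def by (simp add: mult_ac)
  have e2a: "q^4*(q^2)^Suc m = z*q^2" unfolding z_def by (simp add: mult_ac)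
  have e2: "(q^4*(q^2)^Suc m)^n = z^n * x" unfolding e2a x_def by (simp add: power_mult_distrib)
  have "poch q c (Suc n) = (1 - c) * poch q (c*q^2) n" by (rule poch_shift)
  then have e3: "poch q (c*q^2) n = poch q c n * (1 - c*x) / (1 - c)"
    using c1 unfolding poch_Suc x_def by (simp add: field_simps)
  show ?thesis
    unfolding tt_def e1 e2 e3 c_def[symmetric] z_def[symmetric]
    using P2 P3 f3 c1 by (simp add: field_simps power2_eq_square)
qed


lemma alg:
  fixes q z x t c w :: real
  assumes "c = z*q^2" "w = z*q" "1 - c*x \<noteq> 0" "1 - q^2*x \<noteq> 0"
  shows "(1 - c)*(1 - z)*t - (1 - w)^2*(t*((1 - c)*x/(1 - c*x)))
     = (-(1-c)*(1-q^2*x)*(t*((1 - q*x)^2*z/((1-q^2*x)*(1-c*x))))) - (-(1-c)*(1-x)*t)"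
proof -
  define D where "D = 1 - c*x"
  have D: "D \<noteq> 0" using assms unfolding D_def by simp
  have l: "(1 - c)*(1 - z)*t - (1 - w)^2*(t*((1 - c)*x/(1 - c*x)))
     = ((1-c)*(1-z)*t*D - (1-w)^2*t*(1-c)*x)/D"
    using D unfolding D_def[symmetric] by (simp add: field_simps)
  have r: "(-(1-c)*(1-q^2*x)*(t*((1 - q*x)^2*z/((1-q^2*x)*(1-c*x))))) - (-(1-c)*(1-x)*t)
     = ((1-c)*(1-x)*t*D - (1-c)*t*(1-q*x)^2*z)/D"
    using D assms(4) unfolding D_def[symmetric] by (simp add: field_simps)
  have n: "(1-c)*(1-z)*t*D - (1-w)^2*t*(1-c)*x = (1-c)*(1-x)*t*D - (1-c)*t*(1-q*x)^2*z"
    unfolding D_def assms(1,2) by (simp add: algebra_simps power2_eq_square)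
  show ?thesis unfolding l r n ..
qed

lemma tele:
  fixes q :: real and m N :: nat
  assumes "0 < q" "q < 1"
  defines "c \<equiv> q^6*(q^2)^m" and "z \<equiv> q^4*(q^2)^m" and "w \<equiv> q^5*(q^2)^m"
  shows "(\<Sum>n<N. (1-c)*(1-z)*tt q m n - (1-w)^2*tt q (Suc m) n) = -(1-c)*(1-(q^2)^N)*tt q m N"
proof (induction N)
  case 0 then show ?case by simp
next
  case (Suc N)
  note sp = small_pows[OF assms(1,2)]
  define x where "x = (q^2)^N"
  have f2: "0 < 1 - q^2*x" unfolding x_def using assms(1,2) sp by (intro fac_small) auto
  have f3: "0 < 1 - c*x" unfolding x_def c_def using assms(1,2) sp by (intro fac_small) auto
  have a: "(1 - c)*(1 - z)*tt q m N - (1 - w)^2*(tt q m N*((1 - c)*x/(1 - c*x)))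
     = (-(1-c)*(1-q^2*x)*(tt q m N*((1 - q*x)^2*z/((1-q^2*x)*(1-c*x))))) - (-(1-c)*(1-x)*tt q m N)"
  proof (rule alg)
    show "c = z*q^2" unfolding c_def z_def by (simp add: mult_ac power_add[symmetric])
    have "q^5 = q^4*q" by (simp add: numeral_eq_Suc)
    then show "w = z*q" unfolding w_def z_def by (simp add: mult_ac)
  qed (use f2 f3 in auto)
  have xs: "(q^2)^Suc N = q^2*x" unfolding x_def by simp
  show ?case
    unfolding sum.lessThan_Suc Suc xs
    using a unfolding tt_Suc_m[OF assms(1,2), of m N] tt_Suc_n[OF assms(1,2), of m N]
      c_def[symmetric] z_def[symmetric] x_def[symmetric]
    by simp
qed

definition FF :: "real \<Rightarrow> nat \<Rightarrow> real" where "FF q m = suminf (tt q m)"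

lemma FF_rel:
  fixes q :: real and m :: nat
  assumes "0 < q" "q < 1"
  shows "(1 - q^6*(q^2)^m)*(1 - q^4*(q^2)^m) * FF q m = (1 - q^5*(q^2)^m)^2 * FF q (Suc m)"
proof -
  define c where "c = q^6*(q^2)^m"
  define z where "z = q^4*(q^2)^m"
  define w where "w = q^5*(q^2)^m"
  have s1: "(\<lambda>n. (1-c)*(1-z)*tt q m n - (1-w)^2*tt q (Suc m) n) sums ((1-c)*(1-z)*FF q m - (1-w)^2*FF q (Suc m))"
    unfolding FF_def
    by (intro sums_diff sums_mult summable_sums tt_summable assms)
  have q2: "norm (q^2) < 1" using small_pows[OF assms] by simp
  have "(\<lambda>N. -(1-c)*(1-(q^2)^N)*tt q m N) \<longlonglongrightarrow> -(1-c)*(1-0)*0"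
    by (intro tendsto_intros LIMSEQ_power_zero q2 summable_LIMSEQ_zero tt_summable assms)
  then have s2: "(\<lambda>n. (1-c)*(1-z)*tt q m n - (1-w)^2*tt q (Suc m) n) sums 0"
    unfolding sums_def c_def z_def w_def tele[OF assms] by simp
  from sums_unique2[OF s1 s2] show ?thesis unfolding c_def z_def w_def by simp
qed

lemma FF_iter:
  fixes q :: real
  assumes "0 < q" "q < 1"
  shows "FF q 0 * (\<Prod>k<M. (1 - q^6*(q^2)^k)*(1 - q^4*(q^2)^k)) = FF q M * (\<Prod>k<M. (1 - q^5*(q^2)^k)^2)"
proof (induction M)
  case 0 then show ?case by simp
next
  case (Suc M)
  have "FF q 0 * (\<Prod>k<Suc M. (1 - q^6*(q^2)^k)*(1 - q^4*(q^2)^k))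
     = (FF q M * (\<Prod>k<M. (1 - q^5*(q^2)^k)^2)) * ((1 - q^6*(q^2)^M)*(1 - q^4*(q^2)^M))"
    using Suc by (simp add: mult_ac)
  also have "\<dots> = (\<Prod>k<M. (1 - q^5*(q^2)^k)^2) * ((1 - q^6*(q^2)^M)*(1 - q^4*(q^2)^M) * FF q M)"
    by (simp add: mult_ac)
  also have "\<dots> = (\<Prod>k<M. (1 - q^5*(q^2)^k)^2) * ((1 - q^5*(q^2)^M)^2 * FF q (Suc M))"
    using FF_rel[OF assms, of M] by simp
  also have "\<dots> = FF q (Suc M) * (\<Prod>k<Suc M. (1 - q^5*(q^2)^k)^2)"
    by (simp add: mult_ac)
  finally show ?case .
qed


lemma FF_lim:
  fixes q :: real
  assumes "0 < q" "q < 1"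
  shows "FF q \<longlonglongrightarrow> 1"
proof (rule tendsto_sandwich)
  note sp = small_pows[OF assms]
  have q4: "q^4 < 1" using assms by (simp add: power_less_one_iff)
  have b: "1 \<le> FF q M \<and> FF q M \<le> 1 + (q^2)^M / (1 - q^4)" for M
  proof -
    define z where "z = q^4*(q^2)^M"
    have z0: "0 < z" "z < 1" unfolding z_def using sp by auto
    have sm: "summable (tt q M)" by (rule tt_summable[OF assms])
    have h: "FF q M = tt q M 0 + (\<Sum>n. tt q M (Suc n))"
      unfolding FF_def using suminf_split_head[OF sm] by simp
    have t0: "tt q M 0 = 1" by (simp add: tt_def)
    have sm2: "summable (\<lambda>n. tt q M (Suc n))" using sm by (simp add: summable_Suc_iff)
    have geo: "(\<lambda>n. z * z^n) sums (z * (1/(1-z)))"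
      using z0 by (intro sums_mult geometric_sums) auto
    have "(\<Sum>n. tt q M (Suc n)) \<le> (\<Sum>n. z * z^n)"
    proof (rule suminf_le)
      show "tt q M (Suc n) \<le> z * z^n" for n
        using tt_nonneg_le(2)[OF assms, of M "Suc n"] unfolding z_def by simp
    qed (use sm2 geo in \<open>auto simp: sums_iff\<close>)
    also have "\<dots> = z/(1-z)" using geo by (simp add: sums_iff)
    also have "\<dots> \<le> (q^2)^M / (1 - q^4)"
    proof (rule frac_le)
      show "z \<le> (q^2)^M" unfolding z_def using q4 sp by (simp add: mult_left_le_one_le)
      show "0 < 1 - q^4" using q4 by simp
      show "1 - q^4 \<le> 1 - z" unfolding z_def using q4 sp
        by (simp add: mult_right_le_one_le)
    qed simp
    finally have up: "(\<Sum>n. tt q M (Suc n)) \<le> (q^2)^M / (1 - q^4)" .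
    have lo: "0 \<le> (\<Sum>n. tt q M (Suc n))"
      using sm2 tt_nonneg_le(1)[OF assms] by (intro suminf_nonneg) auto
    show ?thesis using h t0 up lo by simp
  qed
  show "\<forall>\<^sub>F n in sequentially. 1 \<le> FF q n" using b by simp
  show "\<forall>\<^sub>F n in sequentially. FF q n \<le> 1 + (q^2)^n / (1 - q^4)" using b by simp
  show "(\<lambda>n. 1::real) \<longlonglongrightarrow> 1" by simp
  have "norm (q^2) < 1" using sp by simp
  then have "(\<lambda>n. 1 + (q^2)^n / (1 - q^4)) \<longlonglongrightarrow> 1 + 0 / (1 - q^4)"
    using q4 by (intro tendsto_intros LIMSEQ_power_zero) auto
  then show "(\<lambda>n. 1 + (q^2)^n / (1 - q^4)) \<longlonglongrightarrow> 1" by simp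
qed

lemma qp_conv:
  fixes q w :: real
  assumes "0 < q" "q < 1" "0 < w" "w < 1"
  shows "convergent_prod (\<lambda>k. 1 - w*(q^2)^k)"
proof -
  note sp = small_pows[OF assms(1,2)]
  have "convergent_prod (\<lambda>k. 1 + (-(w*(q^2)^k)))"
  proof (rule summable_imp_convergent_prod_real)
    have "summable (\<lambda>k. w*(q^2)^k)" using sp by (intro summable_mult summable_geometric) auto
    then show "summable (\<lambda>k. \<bar>-(w*(q^2)^k)\<bar>)" using assms by simp
    show "-(w*(q^2)^k) \<noteq> -1" for k using fac_small(1)[of q w k] assms by auto
  qed
  then show ?thesis by simp
qed

lemma qp_lim:
  fixes q w :: real
  assumes "0 < q" "q < 1" "0 < w" "w < 1"
  shows "(\<lambda>M. \<Prod>k<M. 1 - w*(q^2)^k) \<longlonglongrightarrow> qpoch_inf w (q^2)"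
  unfolding qpoch_inf_def
  by (rule has_prod_imp_tendsto'[OF convergent_prod_has_prod[OF qp_conv[OF assms]]])

lemma qp_nz:
  fixes q w :: real
  assumes "0 < q" "q < 1" "0 < w" "w < 1"
  shows "qpoch_inf w (q^2) \<noteq> 0"
  unfolding qpoch_inf_def
proof (rule prodinf_nonzero[OF qp_conv[OF assms]])
  fix i show "1 - w*(q^2)^i \<noteq> 0"
    using fac_small(1)[OF assms(1,2) less_imp_le[OF assms(3)] assms(4), of i] by linarith
qed

lemma qp_shift:
  fixes q w :: real
  assumes "0 < q" "q < 1" "0 < w" "w < 1"
  shows "qpoch_inf w (q^2) = (1 - w) * qpoch_inf (w*q^2) (q^2)"
proof -
  have "(\<Prod>n. 1 - w*(q^2)^(Suc n)) = qpoch_inf w (q^2) / (1 - w*(q^2)^0)"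
    unfolding qpoch_inf_def
    by (rule prodinf_split_head[OF qp_conv[OF assms]]) (use assms in simp)
  moreover have "(\<lambda>n. 1 - w*(q^2)^(Suc n)) = (\<lambda>n. 1 - w*q^2*(q^2)^n)" by (simp add: mult_ac)
  ultimately have "qpoch_inf (w*q^2) (q^2) = qpoch_inf w (q^2) / (1 - w)"
    unfolding qpoch_inf_def by simp
  then show ?thesis using assms by simp
qed


lemma FF0:
  fixes q :: real
  assumes "0 < q" "q < 1"
  shows "FF q 0 = qpoch_inf (q^5) (q^2) ^ 2 / (qpoch_inf (q^6) (q^2) * qpoch_inf (q^4) (q^2))"
proof -
  have p: "0 < q^j" "q^j < 1" if "j > 0" for j::nat
    using assms that by (auto simp: power_less_one_iff)
  have A: "(\<lambda>M. \<Prod>k<M. (1 - q^6*(q^2)^k)*(1 - q^4*(q^2)^k))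
     \<longlonglongrightarrow> qpoch_inf (q^6) (q^2) * qpoch_inf (q^4) (q^2)"
    unfolding prod.distrib by (intro tendsto_mult qp_lim assms p) auto
  have B: "(\<lambda>M. \<Prod>k<M. (1 - q^5*(q^2)^k)^2) \<longlonglongrightarrow> qpoch_inf (q^5) (q^2) ^ 2"
    unfolding prod_power_distrib[symmetric] by (intro tendsto_power qp_lim assms p) auto
  have Anz: "(\<Prod>k<M. (1 - q^6*(q^2)^k)*(1 - q^4*(q^2)^k)) \<noteq> 0" for M
  proof -
    have "0 < (\<Prod>k<M. (1 - q^6*(q^2)^k)*(1 - q^4*(q^2)^k))"
    proof (rule prod_pos)
      fix k
      have "0 < 1 - q^6*(q^2)^k" "0 < 1 - q^4*(q^2)^k"
        using fac_small(1)[OF assms, of "q^6" k] fac_small(1)[OF assms, of "q^4" k] p[of 6] p[of 4]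
        by auto
      then show "0 < (1 - q^6*(q^2)^k)*(1 - q^4*(q^2)^k)" by simp
    qed
    then show ?thesis by (metis less_irrefl)
  qed
  have eq: "FF q 0 = FF q M * (\<Prod>k<M. (1 - q^5*(q^2)^k)^2) / (\<Prod>k<M. (1 - q^6*(q^2)^k)*(1 - q^4*(q^2)^k))" for M
    using FF_iter[OF assms, of M] Anz[of M] by (simp add: field_simps)
  have nz: "qpoch_inf (q^6) (q^2) * qpoch_inf (q^4) (q^2) \<noteq> 0"
    using qp_nz[OF assms p[of 6]] qp_nz[OF assms p[of 4]] by simp
  have "(\<lambda>M. FF q M * (\<Prod>k<M. (1 - q^5*(q^2)^k)^2) / (\<Prod>k<M. (1 - q^6*(q^2)^k)*(1 - q^4*(q^2)^k)))
     \<longlonglongrightarrow> 1 * qpoch_inf (q^5) (q^2) ^ 2 / (qpoch_inf (q^6) (q^2) * qpoch_inf (q^4) (q^2))"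
    by (intro tendsto_divide tendsto_mult FF_lim assms A B nz)
  then have "(\<lambda>M. FF q 0) \<longlonglongrightarrow> qpoch_inf (q^5) (q^2) ^ 2 / (qpoch_inf (q^6) (q^2) * qpoch_inf (q^4) (q^2))"
    unfolding eq[symmetric] by simp
  then show ?thesis using LIMSEQ_const_iff by blast
qed


lemma qn_int:
  fixes q :: real assumes "0 < q" "q < 1"
  shows "qnum (q^2) (real k) = (1 - (q^2)^k)/(1-q^2)"
  using assms by (simp add: qnum_def powr_realpow)

lemma qn_half:
  fixes q :: real assumes "0 < q" "q < 1"
  shows "qnum (q^2) (1/2 + real k) = (1 - q*(q^2)^k)/(1-q^2)"
proof -
  have "(q^2) powr (1/2 + real k) = (q^2) powr (1/2) * (q^2) powr (real k)"
    by (simp add: powr_add)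
  also have "(q^2) powr (1/2) = q" using assms by (simp add: powr_half_sqrt)
  also have "(q^2) powr (real k) = (q^2)^k" using assms by (simp add: powr_realpow)
  finally show ?thesis unfolding qnum_def by simp
qed

lemma qhalf_eq:
  fixes q :: real assumes "0 < q" "q < 1"
  shows "qhalf_poch (q^2) n = poch q q n / (1-q^2)^n"
proof (induction n)
  case 0 then show ?case by (simp add: qhalf_poch_def)
next
  case (Suc n)
  have "qhalf_poch (q^2) (Suc n) = qhalf_poch (q^2) n * qnum (q^2) (1/2 + real n)"
    by (simp add: qhalf_poch_def)
  then show ?case using Suc qn_half[OF assms, of n] by (simp add: poch_Suc)
qed

lemma qfact_eq:
  fixes q :: real assumes "0 < q" "q < 1"
  shows "qfact (q^2) n = poch q (q^2) n / (1-q^2)^n"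
proof (induction n)
  case 0 then show ?case by (simp add: qfact_def)
next
  case (Suc n)
  have "qfact (q^2) (Suc n) = qfact (q^2) n * qnum (q^2) (real (Suc n))"
    by (simp add: qfact_def)
  then show ?case using Suc qn_int[OF assms, of "Suc n"] by (simp add: poch_Suc mult_ac)
qed

lemma poch2:
  fixes q :: real
  shows "poch q (q^2) (n+2) = (1-q^2)*(1-q^4)*poch q (q^6) n"
proof -
  have "poch q (q^2) (Suc (Suc n)) = (1-q^2) * poch q (q^2*q^2) (Suc n)" by (rule poch_shift)
  also have "\<dots> = (1-q^2) * ((1 - q^2*q^2) * poch q (q^2*q^2*q^2) n)" by (simp only: poch_shift)
  also have "q^2*q^2 = q^4" by (simp add: power_add[symmetric])
  also have "q^4*q^2 = q^6" by (simp add: power_add[symmetric])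
  finally show ?thesis by simp
qed

lemma term_eq:
  fixes q :: real assumes "0 < q" "q < 1"
  shows "(qhalf_poch (q^2) n)^2 / (qfact (q^2) n * qfact (q^2) (n+2)) * q^(4*n) = tt q 0 n / (1+q^2)"
proof -
  note sp = small_pows[OF assms]
  have P2: "0 < poch q (q^2) n" using assms sp by (intro poch_pos) auto
  have q6: "q^6 < 1" using assms by (simp add: power_less_one_iff)
  have P6: "0 < poch q (q^6) n" using assms q6 by (intro poch_pos) auto
  have "0 \<le> q^2" by simp
  then have a: "1 - q^2 \<noteq> 0" "1 + q^2 \<noteq> 0" using sp by linarith+
  have q4: "1 - q^4 = (1-q^2)*(1+q^2)" by (simp add: algebra_simps power_add[symmetric])
  have pw: "q^(4*n) = (q^4)^n" by (simp add: power_mult)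
  have k: "(1-q^2)^n \<noteq> 0" using a by simp
  have e: "(1-q^2)^(n+2) = (1-q^2)^n * (1-q^2)^2" by (rule power_add)
  have abs: "(pa/kk)^2/((pb/kk)*((ss * (ss * dd) * pc)/(kk * ss^2))) * gg = pa^2/(pb*pc)*gg/dd"
    if "pb \<noteq> 0" "pc \<noteq> 0" "ss \<noteq> 0" "dd \<noteq> 0" "kk \<noteq> 0" for pa pb pc ss dd kk gg :: real
    using that by (simp add: field_simps power2_eq_square)
  show ?thesis
    unfolding qhalf_eq[OF assms] qfact_eq[OF assms] poch2 tt_def q4 pw e
    using abs[of "poch q (q^2) n" "poch q (q^6) n" "1-q^2" "1+q^2" "(1-q^2)^n" "poch q q n" "(q^4)^n"]
      P2 P6 a k by simp
qed

lemma final_alg: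
  fixes a b d e P5 P6 r :: real
  assumes "a \<noteq> 0" "b \<noteq> 0" "d \<noteq> 0" "e \<noteq> 0" "P5 \<noteq> 0" "P6 \<noteq> 0" "r \<noteq> 0"
  shows "P5^2/(P6*((a*b*d)*P6))/d = b^4*r/(((a*b)*r*((a*b)*((a*b*d)*P6))^2/((a*((a*e)*P5))^2))*e^2)"
  using assms by (simp add: field_simps power2_eq_square eval_nat_numeral)


theorem mainTheorem6:
  fixes q :: real
  assumes "0 < q" and "q < 1"
  shows "(\<lambda>n. (qhalf_poch (q^2) n)^2 / (qfact (q^2) n * qfact (q^2) (n+2)) * q^(4*n))
           sums ((1+q)^4 * q powr (1/4) / (pi_q q * (1+q+q^2)^2))"
proof -
  have p: "0 < q^j" "q^j < 1" if "j > 0" for j::nat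
    using assms that by (auto simp: power_less_one_iff)
  have s: "(\<lambda>n. tt q 0 n / (1+q^2)) sums (FF q 0 / (1+q^2))"
    unfolding FF_def by (intro sums_divide summable_sums tt_summable assms)
  define P5 where "P5 = qpoch_inf (q^5) (q^2)"
  define P6 where "P6 = qpoch_inf (q^6) (q^2)"
  have e3: "q*q^2 = q^3" "q^3*q^2 = q^5" "q^2*q^2 = q^4" "q^4*q^2 = q^6"
    by (simp_all add: power_add[symmetric] eval_nat_numeral)
  have P1: "qpoch_inf q (q^2) = (1-q)*((1-q^3)*P5)"
    using qp_shift[OF assms assms, unfolded e3(1)] qp_shift[OF assms p[of 3], unfolded e3(2)]
    unfolding P5_def by simp
  have P4: "qpoch_inf (q^4) (q^2) = (1-q^4)*P6"
    using qp_shift[OF assms p[of 4], unfolded e3(4)] unfolding P6_def by simp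
  have P2: "qpoch_inf (q^2) (q^2) = (1-q^2)*((1-q^4)*P6)"
    using qp_shift[OF assms p[of 2], unfolded e3(3)] P4 by simp
  have nz: "P5 \<noteq> 0" "P6 \<noteq> 0" unfolding P5_def P6_def
    using qp_nz[OF assms p[of 5]] qp_nz[OF assms p[of 6]] by auto
  have r: "q powr (1/4) \<noteq> 0" using assms by simp
  have f1: "1-q^2 = (1-q)*(1+q)" "1-q^4 = (1-q)*(1+q)*(1+q^2)" "1-q^3 = (1-q)*(1+q+q^2)"
    by (simp_all add: algebra_simps power2_eq_square eval_nat_numeral)
  have nz2: "1-q \<noteq> 0" "1+q \<noteq> 0" "1+q^2 \<noteq> 0" "1+q+q^2 \<noteq> 0"
    using assms by (auto simp: add_pos_pos) (smt (verit) zero_le_power2)+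
  have val: "FF q 0 / (1+q^2) = (1+q)^4 * q powr (1/4) / (pi_q q * (1+q+q^2)^2)"
    unfolding FF0[OF assms] pi_q_def P1 P2 P4 P5_def[symmetric] P6_def[symmetric] f1
    using final_alg[OF nz2(1,2,3,4) nz r] by (simp add: mult_ac)
  show ?thesis
    using s unfolding val term_eq[OF assms] .
qed

end
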